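(* Let $V$ be a finite-dimensional vector space over a field and let $\rho,\lambda$ be endomorphisms of $V$. Suppose there is $n\in\mathbb Z_{\ge1}$ with $\rho^{n+1}=\rho^n$, $\ker(\rho^n)\cap\ker(\lambda)=0$ and $\rho^n\circ\lambda=\lambda\circ\rho^n$. Then $\mathrm{im}(\rho)+\mathrm{im}(\lambda)=V$. *)

theory Defs
  imports "HOL.Vector_Spaces"
begin

end

theory Submission
  imports Defs
begin

lemma funpow_linear:
  assumes "Vector_Spaces.linear s s f" "vector_space s"
  shows "Vector_Spaces.linear s s (f ^^ k)"
proof (induction k)
  case 0
  then show ?case using assms(2) by (simp add: vector_space.linear_id[unfolded id_def])
next
  case (Suc k)
  then show ?case using Vector_Spaces.linear_compose[OF Suc assms(1)] by (simp only: funpow.simps)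
qed

theorem mainTheorem5:
  fixes scale :: "'a::field \<Rightarrow> 'b::ab_group_add \<Rightarrow> 'b"
    and Basis :: "'b set"
    and \<rho> l :: "'b \<Rightarrow> 'b"
    and n :: nat
  assumes "Vector_Spaces.finite_dimensional_vector_space scale Basis"
    and "Vector_Spaces.linear scale scale \<rho>"
    and "Vector_Spaces.linear scale scale l"
    and "n \<ge> 1"
    and "\<rho> ^^ (n + 1) = \<rho> ^^ n"
    and "{v. (\<rho> ^^ n) v = 0} \<inter> {v. l v = 0} = {0}"
    and "(\<rho> ^^ n) \<circ> l = l \<circ> (\<rho> ^^ n)"
  shows "{x + y | x y. x \<in> range \<rho> \<and> y \<in> range l} = UNIV"
proof -
  interpret fd: finite_dimensional_vector_space scale Basis by fact
  interpret vp: vector_space_pair scale scale by unfold_locales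
  define P where "P = \<rho> ^^ n"
  have linP: "Vector_Spaces.linear scale scale P"
    unfolding P_def by (rule funpow_linear[OF assms(2)]) unfold_locales
  interpret lP: linear scale scale P by fact
  interpret ll: linear scale scale l by fact
  have pk: "\<rho> ^^ (n + k) = \<rho> ^^ n" for k
  proof (induction k)
    case (Suc k)
    have "\<rho> ^^ (n + Suc k) = \<rho> ^^ ((n + 1) + k)" by simp
    also have "\<dots> = \<rho> ^^ (n + 1) \<circ> \<rho> ^^ k"
      by (rule funpow_add)
    also have "\<dots> = \<rho> ^^ (n + k)" using assms(5) by (simp add: funpow_add)
    finally show ?case using Suc by simp
  qed simp
  have PP: "P (P v) = P v" for v
  proof -
    have "P \<circ> P = P" unfolding P_def using pk[of n] by (simp add: funpow_add[symmetric])
    then show ?thesis by (metis comp_apply)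
  qed
  have Pl: "P (l v) = l (P v)" for v
    using assms(7) unfolding P_def by (metis comp_apply)
  define f where "f v = P v + l (v - P v)" for v
  have linf: "Vector_Spaces.linear scale scale f"
  proof -
    have "Vector_Spaces.linear scale scale (\<lambda>v. v - P v)"
      using vp.linear_compose_sub[OF fd.linear_id linP] by (simp add: id_def)
    then have "Vector_Spaces.linear scale scale (l \<circ> (\<lambda>v. v - P v))"
      using Vector_Spaces.linear_compose assms(3) by blast
    then show ?thesis using vp.linear_compose_add[OF linP] unfolding f_def by (simp add: comp_def)
  qed
  interpret lf: linear scale scale f by fact
  have "inj f"
    unfolding vp.linear_inj_iff_eq_0[OF linf]
  proof (intro allI impI)
    fix v assume "f v = 0"
    then have "P (f v) = 0" by simp
    then have "P (P v) + P (l (v - P v)) = 0"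
      unfolding f_def by (simp only: lP.add)
    moreover have "P (l (v - P v)) = l (P v - P (P v))" by (simp only: Pl lP.diff)
    ultimately have Pv: "P v = 0" by (simp add: PP)
    then have "l v = 0" using \<open>f v = 0\<close> unfolding f_def by simp
    then show "v = 0" using assms(6) Pv unfolding P_def by blast
  qed
  then have sf: "surj f" using fd.linear_inj_imp_surj[OF linf] by simp
  show ?thesis
  proof (rule set_eqI, simp)
    fix u
    obtain v where "u = f v" using sf by (metis surjD)
    moreover have "P v = \<rho> ((\<rho> ^^ (n - 1)) v)"
    proof -
      have "n = Suc (n - 1)" using assms(4) by simp
      then have "\<rho> ^^ n = \<rho> ^^ Suc (n - 1)" by (rule arg_cong)
      then show ?thesis unfolding P_def by simp
    qed
    ultimately show "\<exists>x y. u = x + y \<and> x \<in> range \<rho> \<and> y \<in> range l"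
      unfolding f_def by blast
  qed
qed

end
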